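(* Let $P$ be a finite poset and $X:P\to\mathcal{P}_{<\infty}$ a diagram of finite posets. If $P$ has a maximum element $p$, then $\operatorname{\underline{hocolim}} X$ collapses to $X_p$ (viewed as a subposet of $\operatorname{\underline{hocolim}} X$). In particular, they are weak equivalent.
   Context: $P$ is viewed as a category with a unique arrow $p\to q$ iff $p\le q$; $\mathcal{P}_{<\infty}$ is the category of finite posets and order-preserving maps. Write $X_p=X(p)$, $f_{pq}=X(p\to q)$. $\operatorname{\underline{hocolim}} X$ is the poset on $\coprod_{p}X_p$ keeping the order within each $X_p$ and, for $x\in X_p$, $y\in X_q$, $p\le q$, setting $x\le y$ iff $f_{pq}(x)\le y$ in $X_q$. For $x$ in a finite poset $Y$: $\hat U_x=\{y<x\}$, $\hat F_x=\{y>x\}$. $x$ is an up beat point if $\hat F_x$ has a minimum, a down beat point if $\hat U_x$ has a maximum. A finite poset is contractible if it can be reduced to one point by removing beat points one at a time. $x$ is a down (resp. up) weak point if $\hat U_x$ (resp. $\hat F_x$) is contractible; removing a weak point is an elementary collapse, and $Y$ collapses to $Z$ if $Z$ is obtained from $Y$ by a sequence of elementary collapses. Two finite posets are weak equivalent if their order complexes are homotopy equivalent. *)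

theory Defs
  imports "HOL-Analysis.Analysis"
begin

definition finite_poset :: "'a set \<Rightarrow> ('a \<Rightarrow> 'a \<Rightarrow> bool) \<Rightarrow> bool" where
  "finite_poset A le \<longleftrightarrow> finite A \<and> (\<forall>x\<in>A. le x x)
     \<and> (\<forall>x\<in>A. \<forall>y\<in>A. le x y \<and> le y x \<longrightarrow> x = y)
     \<and> (\<forall>x\<in>A. \<forall>y\<in>A. \<forall>z\<in>A. le x y \<and> le y z \<longrightarrow> le x z)"

definition poset_diagram ::
  "'p set \<Rightarrow> ('p \<Rightarrow> 'p \<Rightarrow> bool) \<Rightarrow> ('p \<Rightarrow> 'x set) \<Rightarrow> ('p \<Rightarrow> 'x \<Rightarrow> 'x \<Rightarrow> bool)
   \<Rightarrow> ('p \<Rightarrow> 'p \<Rightarrow> 'x \<Rightarrow> 'x) \<Rightarrow> bool" where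
  "poset_diagram P leP Xs leX f \<longleftrightarrow>
     finite_poset P leP
   \<and> (\<forall>p\<in>P. finite_poset (Xs p) (leX p))
   \<and> (\<forall>p\<in>P. \<forall>q\<in>P. leP p q \<longrightarrow>
        (\<forall>x\<in>Xs p. f p q x \<in> Xs q)
      \<and> (\<forall>x\<in>Xs p. \<forall>y\<in>Xs p. leX p x y \<longrightarrow> leX q (f p q x) (f p q y)))
   \<and> (\<forall>p\<in>P. \<forall>x\<in>Xs p. f p p x = x)
   \<and> (\<forall>p\<in>P. \<forall>q\<in>P. \<forall>r\<in>P. leP p q \<and> leP q r \<longrightarrow>
        (\<forall>x\<in>Xs p. f q r (f p q x) = f p r x))"

definition hocolim_set :: "'p set \<Rightarrow> ('p \<Rightarrow> 'x set) \<Rightarrow> ('p \<times> 'x) set" where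
  "hocolim_set P Xs = Sigma P Xs"

definition hocolim_le ::
  "('p \<Rightarrow> 'p \<Rightarrow> bool) \<Rightarrow> ('p \<Rightarrow> 'x \<Rightarrow> 'x \<Rightarrow> bool) \<Rightarrow> ('p \<Rightarrow> 'p \<Rightarrow> 'x \<Rightarrow> 'x)
   \<Rightarrow> 'p \<times> 'x \<Rightarrow> 'p \<times> 'x \<Rightarrow> bool" where
  "hocolim_le leP leX f a b \<longleftrightarrow> leP (fst a) (fst b) \<and> leX (fst b) (f (fst a) (fst b) (snd a)) (snd b)"

definition hatU :: "('a \<Rightarrow> 'a \<Rightarrow> bool) \<Rightarrow> 'a set \<Rightarrow> 'a \<Rightarrow> 'a set" where
  "hatU le Y x = {y \<in> Y. le y x \<and> y \<noteq> x}"

definition hatF :: "('a \<Rightarrow> 'a \<Rightarrow> bool) \<Rightarrow> 'a set \<Rightarrow> 'a \<Rightarrow> 'a set" where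
  "hatF le Y x = {y \<in> Y. le x y \<and> y \<noteq> x}"

definition up_beat_point :: "('a \<Rightarrow> 'a \<Rightarrow> bool) \<Rightarrow> 'a set \<Rightarrow> 'a \<Rightarrow> bool" where
  "up_beat_point le Y x \<longleftrightarrow> (\<exists>m\<in>hatF le Y x. \<forall>y\<in>hatF le Y x. le m y)"

definition down_beat_point :: "('a \<Rightarrow> 'a \<Rightarrow> bool) \<Rightarrow> 'a set \<Rightarrow> 'a \<Rightarrow> bool" where
  "down_beat_point le Y x \<longleftrightarrow> (\<exists>m\<in>hatU le Y x. \<forall>y\<in>hatU le Y x. le y m)"

text \<open>Contractible: reducible to one point by removing beat points one at a time
  (subposets carry the restricted order, i.e. the same relation on a smaller carrier).\<close>
inductive contractible_poset :: "('a \<Rightarrow> 'a \<Rightarrow> bool) \<Rightarrow> 'a set \<Rightarrow> bool" for le where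
  single: "contractible_poset le {y}"
| remove: "\<lbrakk>x \<in> Y; up_beat_point le Y x \<or> down_beat_point le Y x;
            contractible_poset le (Y - {x})\<rbrakk> \<Longrightarrow> contractible_poset le Y"

definition down_weak_point :: "('a \<Rightarrow> 'a \<Rightarrow> bool) \<Rightarrow> 'a set \<Rightarrow> 'a \<Rightarrow> bool" where
  "down_weak_point le Y x \<longleftrightarrow> contractible_poset le (hatU le Y x)"

definition up_weak_point :: "('a \<Rightarrow> 'a \<Rightarrow> bool) \<Rightarrow> 'a set \<Rightarrow> 'a \<Rightarrow> bool" where
  "up_weak_point le Y x \<longleftrightarrow> contractible_poset le (hatF le Y x)"

inductive collapses :: "('a \<Rightarrow> 'a \<Rightarrow> bool) \<Rightarrow> 'a set \<Rightarrow> 'a set \<Rightarrow> bool" for le where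
  refl: "collapses le Y Y"
| step: "\<lbrakk>x \<in> Y; down_weak_point le Y x \<or> up_weak_point le Y x;
          collapses le (Y - {x}) Z\<rbrakk> \<Longrightarrow> collapses le Y Z"

text \<open>Geometric realization of the order complex of (A, le): the union of the simplices
  spanned by nonempty chains, as a subspace of the function space 'a \<Rightarrow> real
  (barycentric coordinates), with the product (= Euclidean for finite A) topology.\<close>
definition order_complex_realization :: "('a \<Rightarrow> 'a \<Rightarrow> bool) \<Rightarrow> 'a set \<Rightarrow> ('a \<Rightarrow> real) set" where
  "order_complex_realization le A =
     {g. (\<forall>v. 0 \<le> g v) \<and> (\<forall>v. v \<notin> A \<longrightarrow> g v = 0) \<and> sum g A = 1
         \<and> (\<forall>u v. 0 < g u \<and> 0 < g v \<longrightarrow> le u v \<or> le v u)}"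

definition weak_equivalent ::
  "('a \<Rightarrow> 'a \<Rightarrow> bool) \<Rightarrow> 'a set \<Rightarrow> ('b \<Rightarrow> 'b \<Rightarrow> bool) \<Rightarrow> 'b set \<Rightarrow> bool" where
  "weak_equivalent le1 A le2 B \<longleftrightarrow>
     (top_of_set (order_complex_realization le1 A)) homotopy_equivalent_space
     (top_of_set (order_complex_realization le2 B))"

end

theory Submission
  imports Defs
begin


lemma fp_sub: "finite_poset A le \<Longrightarrow> B \<subseteq> A \<Longrightarrow> finite_poset B le"
  unfolding finite_poset_def by (meson finite_subset subsetD)

lemma fp_max:
  assumes "finite_poset A le" "R \<subseteq> A" "R \<noteq> {}"
  shows "\<exists>z\<in>R. \<forall>w\<in>R. le z w \<longrightarrow> w = z"
proof -
  have fin: "finite R" using assms finite_subset unfolding finite_poset_def by blast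
  define g where "g z = card {w\<in>R. le w z}" for z
  obtain z where z: "z \<in> R" "\<forall>w\<in>R. g w \<le> g z"
  proof -
    have "Max (g ` R) \<in> g ` R" using fin assms(3) by (intro Max_in) auto
    then obtain z where "z \<in> R" "g z = Max (g ` R)" by auto
    moreover have "\<forall>w\<in>R. g w \<le> Max (g ` R)" using fin by auto
    ultimately show ?thesis using that by auto
  qed
  show ?thesis
  proof (intro bexI[OF _ z(1)] ballI impI)
    fix w assume w: "w \<in> R" "le z w"
    show "w = z"
    proof (rule ccontr)
      assume ne: "w \<noteq> z"
      have sub: "{v\<in>R. le v z} \<subset> {v\<in>R. le v w}"
      proof
        show "{v\<in>R. le v z} \<subseteq> {v\<in>R. le v w}"
          using assms(1,2) w z(1) unfolding finite_poset_def by blast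
        have "le w w" using assms(1,2) w unfolding finite_poset_def by blast
        moreover have "\<not> le w z" using assms(1,2) w z(1) ne unfolding finite_poset_def by blast
        ultimately show "{v\<in>R. le v z} \<noteq> {v\<in>R. le v w}" using w by blast
      qed
      have "g z < g w" unfolding g_def using psubset_card_mono[OF _ sub] fin by simp
      with z(2) w(1) show False by fastforce
    qed
  qed
qed

lemma fp_min:
  assumes "finite_poset A le" "R \<subseteq> A" "R \<noteq> {}"
  shows "\<exists>z\<in>R. \<forall>w\<in>R. le w z \<longrightarrow> w = z"
proof -
  have "finite_poset A (\<lambda>a b. le b a)" using assms(1) unfolding finite_poset_def by blast
  from fp_max[OF this assms(2,3)] show ?thesis .
qed

lemma contractible_min:
  assumes "finite_poset S le" "m \<in> S" "\<forall>y\<in>S. le m y"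
  shows "contractible_poset le S"
  using assms
proof (induction "card S" arbitrary: S rule: less_induct)
  case less
  show ?case
  proof (cases "S = {m}")
    case True then show ?thesis by (simp add: contractible_poset.single)
  next
    case False
    then have ne: "S - {m} \<noteq> {}" using less.prems by blast
    obtain z where z: "z \<in> S - {m}" "\<forall>w\<in>S - {m}. le w z \<longrightarrow> w = z"
      using fp_min[OF less.prems(1) _ ne] by blast
    have hu: "hatU le S z = {m}"
    proof
      show "hatU le S z \<subseteq> {m}" using z unfolding hatU_def by blast
      show "{m} \<subseteq> hatU le S z" using z less.prems unfolding hatU_def by blast
    qed
    have db: "down_beat_point le S z"
      unfolding down_beat_point_def hu using less.prems(1,2) unfolding finite_poset_def by simp
    have fin: "finite S" using less.prems unfolding finite_poset_def by blast
    have "contractible_poset le (S - {z})"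
    proof (rule less.hyps)
      show "card (S - {z}) < card S" using fin z by (meson DiffD1 card_Diff1_less)
      show "finite_poset (S - {z}) le" using less.prems(1) by (rule fp_sub) blast
      show "m \<in> S - {z}" using z less.prems(2) by blast
      show "\<forall>y\<in>S - {z}. le m y" using less.prems(3) by blast
    qed
    then show ?thesis using z db contractible_poset.remove[of z S le] by blast
  qed
qed



lemma real_step:
  assumes po: "finite_poset Y le" and xY: "x \<in> Y" and mY: "m \<in> Y" and xm: "x \<noteq> m"
    and lxm: "le x m" and up: "\<forall>y\<in>Y. le x y \<and> y \<noteq> x \<longrightarrow> le m y"
  shows "top_of_set (order_complex_realization le Y) homotopy_equivalent_space
         top_of_set (order_complex_realization le (Y - {x}))"
proof -
  let ?A = "order_complex_realization le Y"
  let ?B = "order_complex_realization le (Y - {x})"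
  have finY: "finite Y" using po unfolding finite_poset_def by blast
  define h where "h = (\<lambda>(t::real, g::'a \<Rightarrow> real). g(x := t * g x, m := g m + (1 - t) * g x))"
  define r where "r = (\<lambda>g. h (0, g))"
  have hA: "h (t, g) \<in> ?A" if t: "t \<in> {0..1}" and g: "g \<in> ?A" for t g
  proof -
    have g0: "\<forall>v. 0 \<le> g v" and gout: "\<forall>v. v \<notin> Y \<longrightarrow> g v = 0" and gs: "sum g Y = 1"
      and gc: "\<forall>u v. 0 < g u \<and> 0 < g v \<longrightarrow> le u v \<or> le v u"
      using g unfolding order_complex_realization_def by auto
    let ?k = "h (t, g)"
    have k: "?k v = (if v = m then g m + (1 - t) * g x else if v = x then t * g x else g v)" for v
      unfolding h_def using xm by auto
    have "\<forall>v. 0 \<le> ?k v" using g0 t by (simp add: k)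
    moreover have "\<forall>v. v \<notin> Y \<longrightarrow> ?k v = 0" using gout xY mY by (simp add: k)
    moreover have "sum ?k Y = 1"
    proof -
      have "sum ?k Y = sum (\<lambda>v. g v + (if v = m then (1 - t) * g x else 0) + (if v = x then t * g x - g x else 0)) Y"
        by (rule sum.cong) (auto simp: k xm)
      also have "\<dots> = sum g Y + (1 - t) * g x + (t * g x - g x)"
        using finY xY mY by (simp add: sum.distrib)
      finally show ?thesis using gs by (simp add: algebra_simps)
    qed
    moreover have "\<forall>u v. 0 < ?k u \<and> 0 < ?k v \<longrightarrow> le u v \<or> le v u"
    proof (intro allI impI)
      fix u v assume uv: "0 < ?k u \<and> 0 < ?k v"
      have supp: "0 < g w \<or> (w = m \<and> 0 < g x)" if "0 < ?k w" for w
      proof (rule ccontr)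
        assume n: "\<not> (0 < g w \<or> (w = m \<and> 0 < g x))"
        have gw: "g w = 0" using n g0 by (metis order.not_eq_order_implies_strict)
        show False
        proof (cases "w = m")
          case True
          then have "g x = 0" using n g0 by (metis order.not_eq_order_implies_strict)
          then show False using that gw True by (simp add: k)
        next
          case False
          then show False using that gw by (auto simp: k split: if_splits)
        qed
      qed
      have mrel: "le w m \<or> le m w" if "0 < g w" "0 < g x" for w
      proof -
        have wY: "w \<in> Y" using that gout by force
        from gc that have "le w x \<or> le x w" by blast
        then show ?thesis
        proof
          assume "le w x" then show ?thesis using po wY xY mY lxm unfolding finite_poset_def by blast
        next
          assume "le x w" then show ?thesis using up wY lxm by (cases "w = x") auto
        qed
      qed
      have mm: "le m m" using po mY unfolding finite_poset_def by blast
      show "le u v \<or> le v u"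
        using supp[of u] supp[of v] uv gc mrel[of u] mrel[of v] mm by blast
    qed
    ultimately show ?thesis unfolding order_complex_realization_def by blast
  qed
  have hfix: "h (t, g) = g" if "g \<in> ?B" for t g
  proof -
    have "g x = 0" using that unfolding order_complex_realization_def by auto
    then show ?thesis unfolding h_def by (simp add: fun_upd_idem)
  qed
  have BA: "?B \<subseteq> ?A"
  proof
    fix g assume g: "g \<in> ?B"
    have "g x = 0" using g unfolding order_complex_realization_def by auto
    moreover have "sum g (Y - {x}) = 1" using g unfolding order_complex_realization_def by auto
    ultimately have "sum g Y = 1" using finY xY by (simp add: sum.remove)
    then show "g \<in> ?A" using g unfolding order_complex_realization_def by auto
  qed
  have rB: "r g \<in> ?B" if g: "g \<in> ?A" for g
  proof -
    have k: "r g \<in> ?A" unfolding r_def using hA g by auto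
    have x0: "r g x = 0" unfolding r_def h_def using xm by simp
    have "sum (r g) Y = 1" using k unfolding order_complex_realization_def by auto
    then have "sum (r g) (Y - {x}) = 1" using finY xY x0 by (simp add: sum.remove)
    then show ?thesis using k x0 unfolding order_complex_realization_def by auto
  qed
  have conth: "continuous_on ({0..1} \<times> ?A) h"
  proof (rule continuous_on_coordinatewise_then_product)
    fix i
    have c1: "continuous_on ({0..1} \<times> ?A) (\<lambda>z::real \<times> ('a \<Rightarrow> real). snd z j)" for j
    proof -
      have "continuous_on ({0..1} \<times> ?A) snd" by (rule continuous_on_snd[OF continuous_on_id])
      moreover have "continuous_on (snd ` ({0..1} \<times> ?A)) (\<lambda>g::'a \<Rightarrow> real. g j)"
        by (rule continuous_on_subset[OF continuous_on_product_coordinates]) simp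
      ultimately show ?thesis using continuous_on_compose[of "{0..1} \<times> ?A" snd "\<lambda>g. g j"]
        by (simp add: o_def)
    qed
    have eq: "(\<lambda>z. h z i) = (\<lambda>z. if i = m then snd z m + (1 - fst z) * snd z x
            else if i = x then fst z * snd z x else snd z i)"
      unfolding h_def using xm by (auto simp: fun_eq_iff)
    have cont: "continuous_on ({0..1} \<times> ?A) (\<lambda>z::real \<times> ('a \<Rightarrow> real). if i = m then snd z m + (1 - fst z) * snd z x
            else if i = x then fst z * snd z x else snd z i)"
    proof (cases "i = m")
      case True
      have "continuous_on ({0..1} \<times> ?A) (\<lambda>z::real \<times> ('a \<Rightarrow> real). snd z m + (1 - fst z) * snd z x)"
        by (intro continuous_on_add continuous_on_mult continuous_on_diff continuous_on_const
            continuous_on_fst continuous_on_id c1)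
      then show ?thesis using True by simp
    next
      case False
      show ?thesis
      proof (cases "i = x")
        case True
        have "continuous_on ({0..1} \<times> ?A) (\<lambda>z::real \<times> ('a \<Rightarrow> real). fst z * snd z x)"
          by (intro continuous_on_mult continuous_on_fst continuous_on_id c1)
        then show ?thesis using True False by simp
      next
        case False2: False
        show ?thesis using False False2 c1 by simp
      qed
    qed
    show "continuous_on ({0..1} \<times> ?A) (\<lambda>z. h z i)" unfolding eq by (rule cont)
  qed
  have hom: "homotopic_with (\<lambda>x. True) (top_of_set ?A) (top_of_set ?A) (id \<circ> r) id"
  proof -
    have c: "continuous_map (prod_topology (top_of_set {0..1::real}) (top_of_set ?A)) (top_of_set ?A) h"
      using conth hA by (simp add: Pi_iff)
    have "\<exists>h. continuous_map (prod_topology (top_of_set {0..1::real}) (top_of_set ?A)) (top_of_set ?A) h \<and>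
              (\<forall>g \<in> topspace (top_of_set ?A). h(0,g) = (id \<circ> r) g) \<and>
              (\<forall>g \<in> topspace (top_of_set ?A). h(1,g) = id g) \<and>
              (\<forall>t \<in> {0..1}. True)"
    proof (rule exI[where x=h], intro conjI)
      show "\<forall>g \<in> topspace (top_of_set ?A). h(0,g) = (id \<circ> r) g" by (simp add: r_def)
      show "\<forall>g \<in> topspace (top_of_set ?A). h(1,g) = id g" by (simp add: h_def)
    qed (use c in auto)
    then show ?thesis by (subst homotopic_with) auto
  qed
  have contr: "continuous_on ?A r"
    unfolding r_def
    by (rule continuous_on_compose2[OF conth continuous_on_Pair[OF continuous_on_const continuous_on_id]]) auto
  have ret: "retraction_maps (top_of_set ?A) (top_of_set ?B) r id"
    unfolding retraction_maps_def
  proof (intro conjI)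
    show "continuous_map (top_of_set ?A) (top_of_set ?B) r" using contr rB by (simp add: Pi_iff)
    show "continuous_map (top_of_set ?B) (top_of_set ?A) id" using BA by (simp add: Pi_iff subset_iff)
    show "\<forall>g\<in>topspace (top_of_set ?B). r (id g) = g" using hfix by (simp add: r_def)
  qed
  show ?thesis
    by (rule deformation_retraction_imp_homotopy_equivalent_space[OF hom ret])
qed



lemma up_weak:
  assumes po: "finite_poset Y le" and xY: "x \<in> Y" and mY: "m \<in> Y" and xm: "x \<noteq> m"
    and lxm: "le x m" and up: "\<forall>y\<in>Y. le x y \<and> y \<noteq> x \<longrightarrow> le m y"
  shows "up_weak_point le Y x"
  unfolding up_weak_point_def
proof (rule contractible_min)
  show "finite_poset (hatF le Y x) le" using po by (rule fp_sub) (auto simp: hatF_def)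
  show "m \<in> hatF le Y x" using mY xm lxm by (auto simp: hatF_def)
  show "\<forall>y\<in>hatF le Y x. le m y" using up by (auto simp: hatF_def)
qed

lemma abstract_collapse:
  assumes "finite R" "finite_poset (A \<union> R) le" "A \<inter> R = {}"
    and "\<forall>z\<in>R. \<exists>m\<in>A. le z m \<and> (\<forall>y\<in>A. le z y \<longrightarrow> le m y)"
  shows "collapses le (A \<union> R) A \<and>
    top_of_set (order_complex_realization le (A \<union> R)) homotopy_equivalent_space
    top_of_set (order_complex_realization le A)"
  using assms
proof (induction "card R" arbitrary: R rule: less_induct)
  case less
  show ?case
  proof (cases "R = {}")
    case True
    then show ?thesis by (simp add: collapses.refl homotopy_equivalent_space_refl)
  next
    case False
    obtain z where z: "z \<in> R" "\<forall>w\<in>R. le z w \<longrightarrow> w = z"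
      using fp_max[OF less.prems(2) _ False] by blast
    obtain m where m: "m \<in> A" "le z m" "\<forall>y\<in>A. le z y \<longrightarrow> le m y"
      using less.prems(4) z(1) by blast
    let ?Y = "A \<union> R"
    have zA: "z \<notin> A" using z(1) less.prems(3) by blast
    have zm: "z \<noteq> m" using zA m(1) by blast
    have up: "\<forall>y\<in>?Y. le z y \<and> y \<noteq> z \<longrightarrow> le m y" using z m by blast
    have eq: "?Y - {z} = A \<union> (R - {z})" using zA by blast
    have IH: "collapses le (A \<union> (R - {z})) A \<and>
      top_of_set (order_complex_realization le (A \<union> (R - {z}))) homotopy_equivalent_space
      top_of_set (order_complex_realization le A)"
    proof (rule less.hyps)
      show "card (R - {z}) < card R" using less.prems(1) z(1) by (meson card_Diff1_less)
      show "finite (R - {z})" using less.prems(1) by blast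
      show "finite_poset (A \<union> (R - {z})) le" using less.prems(2) by (rule fp_sub) blast
      show "A \<inter> (R - {z}) = {}" using less.prems(3) by blast
      show "\<forall>za\<in>R - {z}. \<exists>m\<in>A. le za m \<and> (\<forall>y\<in>A. le za y \<longrightarrow> le m y)"
        using less.prems(4) by blast
    qed
    have uw: "up_weak_point le ?Y z"
      by (rule up_weak[OF less.prems(2) _ _ zm m(2) up]) (use z m in auto)
    have he: "top_of_set (order_complex_realization le ?Y) homotopy_equivalent_space
         top_of_set (order_complex_realization le (?Y - {z}))"
      by (rule real_step[OF less.prems(2) _ _ zm m(2) up]) (use z m in auto)
    show ?thesis
    proof
      show "collapses le ?Y A"
        by (rule collapses.step[of z]) (use z uw IH eq in auto)
      show "top_of_set (order_complex_realization le ?Y) homotopy_equivalent_space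
          top_of_set (order_complex_realization le A)"
        using homotopy_eqv_trans[OF he] IH unfolding eq by blast
    qed
  qed
qed



lemma fp_finite: "finite_poset A le \<Longrightarrow> finite A"
  unfolding finite_poset_def by blast
lemma fp_refl: "finite_poset A le \<Longrightarrow> x \<in> A \<Longrightarrow> le x x"
  unfolding finite_poset_def by blast
lemma fp_antisym: "finite_poset A le \<Longrightarrow> x \<in> A \<Longrightarrow> y \<in> A \<Longrightarrow> le x y \<Longrightarrow> le y x \<Longrightarrow> x = y"
  unfolding finite_poset_def by blast
lemma fp_trans: "finite_poset A le \<Longrightarrow> x \<in> A \<Longrightarrow> y \<in> A \<Longrightarrow> z \<in> A \<Longrightarrow> le x y \<Longrightarrow> le y z \<Longrightarrow> le x z"
  unfolding finite_poset_def by blast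

lemma hocolim_poset:
  assumes d: "poset_diagram P leP Xs leX f"
  shows "finite_poset (hocolim_set P Xs) (hocolim_le leP leX f)"
proof -
  have P: "finite_poset P leP" and X: "\<forall>p\<in>P. finite_poset (Xs p) (leX p)"
    and fm: "\<forall>p\<in>P. \<forall>q\<in>P. leP p q \<longrightarrow> (\<forall>x\<in>Xs p. f p q x \<in> Xs q)"
    and mono: "\<forall>p\<in>P. \<forall>q\<in>P. leP p q \<longrightarrow> (\<forall>x\<in>Xs p. \<forall>y\<in>Xs p. leX p x y \<longrightarrow> leX q (f p q x) (f p q y))"
    and fid: "\<forall>p\<in>P. \<forall>x\<in>Xs p. f p p x = x"
    and fc: "\<forall>p\<in>P. \<forall>q\<in>P. \<forall>r\<in>P. leP p q \<and> leP q r \<longrightarrow> (\<forall>x\<in>Xs p. f q r (f p q x) = f p r x)"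
  proof -
    note dd = d[unfolded poset_diagram_def]
    show "finite_poset P leP" using dd by (elim conjE) assumption
    show "\<forall>p\<in>P. finite_poset (Xs p) (leX p)" using dd by (elim conjE) assumption
    show "\<forall>p\<in>P. \<forall>x\<in>Xs p. f p p x = x" using dd by (elim conjE) assumption
    show "\<forall>p\<in>P. \<forall>q\<in>P. \<forall>r\<in>P. leP p q \<and> leP q r \<longrightarrow> (\<forall>x\<in>Xs p. f q r (f p q x) = f p r x)"
      using dd by (elim conjE) assumption
    have c3: "\<forall>p\<in>P. \<forall>q\<in>P. leP p q \<longrightarrow>
        (\<forall>x\<in>Xs p. f p q x \<in> Xs q)
      \<and> (\<forall>x\<in>Xs p. \<forall>y\<in>Xs p. leX p x y \<longrightarrow> leX q (f p q x) (f p q y))"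
      using dd by (elim conjE) assumption
    then show "\<forall>p\<in>P. \<forall>q\<in>P. leP p q \<longrightarrow> (\<forall>x\<in>Xs p. f p q x \<in> Xs q)" by blast
    from c3 show "\<forall>p\<in>P. \<forall>q\<in>P. leP p q \<longrightarrow> (\<forall>x\<in>Xs p. \<forall>y\<in>Xs p. leX p x y \<longrightarrow> leX q (f p q x) (f p q y))" by blast
  qed
  show ?thesis
    unfolding finite_poset_def
  proof (intro conjI ballI impI)
    have "finite P" using P by (rule fp_finite)
    moreover have "\<forall>p\<in>P. finite (Xs p)" using X fp_finite by blast
    ultimately show "finite (hocolim_set P Xs)" unfolding hocolim_set_def by (simp add: finite_SigmaI)
  next
    fix a assume a: "a \<in> hocolim_set P Xs"
    obtain p x where ax: "a = (p, x)" "p \<in> P" "x \<in> Xs p" using a unfolding hocolim_set_def by auto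
    have "leP p p" using fp_refl[OF P ax(2)] .
    moreover have "leX p x x" using fp_refl[of "Xs p" "leX p" x] X ax by blast
    ultimately show "hocolim_le leP leX f a a"
      using ax fid unfolding hocolim_le_def by simp
  next
    fix a b assume a: "a \<in> hocolim_set P Xs" and b: "b \<in> hocolim_set P Xs"
      and ab: "hocolim_le leP leX f a b \<and> hocolim_le leP leX f b a"
    obtain p x where ax: "a = (p, x)" "p \<in> P" "x \<in> Xs p" using a unfolding hocolim_set_def by auto
    obtain q y where by': "b = (q, y)" "q \<in> P" "y \<in> Xs q" using b unfolding hocolim_set_def by auto
    have "leP p q" "leP q p" using ab ax by' unfolding hocolim_le_def by simp_all
    then have pq: "p = q" using fp_antisym[OF P ax(2) by'(2)] by blast
    then have "leX p x y" "leX p y x" using ab ax by' fid unfolding hocolim_le_def by simp_all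
    then have "x = y" using fp_antisym[of "Xs p" "leX p" x y] X ax by' pq by blast
    then show "a = b" using ax by' pq by simp
  next
    fix a b c assume a: "a \<in> hocolim_set P Xs" and b: "b \<in> hocolim_set P Xs" and c: "c \<in> hocolim_set P Xs"
      and abc: "hocolim_le leP leX f a b \<and> hocolim_le leP leX f b c"
    obtain p x where ax: "a = (p, x)" "p \<in> P" "x \<in> Xs p" using a unfolding hocolim_set_def by auto
    obtain q y where by': "b = (q, y)" "q \<in> P" "y \<in> Xs q" using b unfolding hocolim_set_def by auto
    obtain r z where cz: "c = (r, z)" "r \<in> P" "z \<in> Xs r" using c unfolding hocolim_set_def by auto
    have pq: "leP p q" and xy: "leX q (f p q x) y" and qr: "leP q r" and yz: "leX r (f q r y) z"
      using abc ax by' cz unfolding hocolim_le_def by auto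
    have pr: "leP p r" using fp_trans[OF P ax(2) by'(2) cz(2) pq qr] .
    have fx: "f p q x \<in> Xs q" using fm ax by' pq by blast
    have "leX r (f q r (f p q x)) (f q r y)" using mono by' cz qr fx xy by blast
    moreover have "f q r (f p q x) = f p r x" using fc ax by' cz pq qr by blast
    ultimately have 1: "leX r (f p r x) (f q r y)" by simp
    have fx2: "f p r x \<in> Xs r" "f q r y \<in> Xs r" using fm ax by' cz pr qr by blast+
    have "finite_poset (Xs r) (leX r)" using X cz by blast
    then have "leX r (f p r x) z" using fp_trans[of "Xs r" "leX r"] cz 1 yz fx2 by blast
    then show "hocolim_le leP leX f a c" using pr ax cz unfolding hocolim_le_def by simp
  qed
qed

theorem corollary2p5:
  fixes P :: "'p set" and leP :: "'p \<Rightarrow> 'p \<Rightarrow> bool"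
    and Xs :: "'p \<Rightarrow> 'x set" and leX :: "'p \<Rightarrow> 'x \<Rightarrow> 'x \<Rightarrow> bool"
    and f :: "'p \<Rightarrow> 'p \<Rightarrow> 'x \<Rightarrow> 'x" and p :: 'p
  assumes "poset_diagram P leP Xs leX f"
    and "p \<in> P" and "\<forall>q\<in>P. leP q p"
  shows "collapses (hocolim_le leP leX f) (hocolim_set P Xs) ({p} \<times> Xs p)
       \<and> weak_equivalent (hocolim_le leP leX f) (hocolim_set P Xs)
                         (hocolim_le leP leX f) ({p} \<times> Xs p)"
proof -
  let ?le = "hocolim_le leP leX f"
  have po: "finite_poset (hocolim_set P Xs) ?le" by (rule hocolim_poset[OF assms(1)])
  have P: "finite_poset P leP" and X: "\<forall>p\<in>P. finite_poset (Xs p) (leX p)"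
    and fm: "\<forall>p\<in>P. \<forall>q\<in>P. leP p q \<longrightarrow> (\<forall>x\<in>Xs p. f p q x \<in> Xs q)"
    and fid: "\<forall>p\<in>P. \<forall>x\<in>Xs p. f p p x = x"
  proof -
    note dd = assms(1)[unfolded poset_diagram_def]
    show "finite_poset P leP" using dd by (elim conjE) assumption
    show "\<forall>p\<in>P. finite_poset (Xs p) (leX p)" using dd by (elim conjE) assumption
    show "\<forall>p\<in>P. \<forall>x\<in>Xs p. f p p x = x" using dd by (elim conjE) assumption
    have c3: "\<forall>p\<in>P. \<forall>q\<in>P. leP p q \<longrightarrow>
        (\<forall>x\<in>Xs p. f p q x \<in> Xs q)
      \<and> (\<forall>x\<in>Xs p. \<forall>y\<in>Xs p. leX p x y \<longrightarrow> leX q (f p q x) (f p q y))"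
      using dd by (elim conjE) assumption
    then show "\<forall>p\<in>P. \<forall>q\<in>P. leP p q \<longrightarrow> (\<forall>x\<in>Xs p. f p q x \<in> Xs q)" by blast
  qed
  have eq: "hocolim_set P Xs = ({p} \<times> Xs p) \<union> Sigma (P - {p}) Xs"
    using assms(2) unfolding hocolim_set_def by auto
  have fin: "finite (Sigma (P - {p}) Xs)"
    using fp_finite[OF po] unfolding eq by blast
  have key: "\<forall>z\<in>Sigma (P - {p}) Xs. \<exists>m\<in>{p} \<times> Xs p. ?le z m \<and> (\<forall>y\<in>{p} \<times> Xs p. ?le z y \<longrightarrow> ?le m y)"
  proof
    fix z assume z: "z \<in> Sigma (P - {p}) Xs"
    obtain q x where zq: "z = (q, x)" "q \<in> P" "x \<in> Xs q" using z by auto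
    have qp: "leP q p" using assms(3) zq by blast
    have fx: "f q p x \<in> Xs p" using fm zq assms(2) qp by blast
    have pp: "leP p p" using fp_refl[OF P assms(2)] .
    have fxx: "leX p (f q p x) (f q p x)" using fp_refl[of "Xs p" "leX p"] X assms(2) fx by blast
    show "\<exists>m\<in>{p} \<times> Xs p. ?le z m \<and> (\<forall>y\<in>{p} \<times> Xs p. ?le z y \<longrightarrow> ?le m y)"
    proof (intro bexI[of _ "(p, f q p x)"] conjI ballI impI)
      show "(p, f q p x) \<in> {p} \<times> Xs p" using fx by simp
      show "?le z (p, f q p x)" using zq qp fxx unfolding hocolim_le_def by simp
      fix y assume y: "y \<in> {p} \<times> Xs p" "?le z y"
      then have "leX p (f q p x) (snd y)" "fst y = p" using zq unfolding hocolim_le_def by auto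
      then show "?le (p, f q p x) y" using pp fid fx assms(2) unfolding hocolim_le_def by simp
    qed
  qed
  have r: "collapses ?le (({p} \<times> Xs p) \<union> Sigma (P - {p}) Xs) ({p} \<times> Xs p) \<and>
    top_of_set (order_complex_realization ?le (({p} \<times> Xs p) \<union> Sigma (P - {p}) Xs)) homotopy_equivalent_space
    top_of_set (order_complex_realization ?le ({p} \<times> Xs p))"
    by (rule abstract_collapse[OF fin po[unfolded eq] _ key]) auto
  then show ?thesis unfolding weak_equivalent_def eq by blast
qed

end
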